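(* Let $q$ be a prime power, $n\ge 1$, and $1\le k\le n(q-1)$. Then $C_{n,k}^q$ is self-orthogonal (i.e. $C_{n,k}^q\subseteq (C_{n,k}^q)^\perp$) if and only if $1\le k\le \frac{n(q-1)}{2}$ and $2k\equiv 0\pmod{q-1}$. In particular, in that case $\operatorname{Hull}(C_{n,k}^q)=C_{n,k}^q$.
   Context: For a prime power $q$ and integers $n\ge 1$, $k\ge 0$, the projective Reed-Muller code $C_{n,k}^q\subseteq \mathbb{F}_q^N$, $N=\frac{q^{n+1}-1}{q-1}$, is defined as follows. For each point of $\mathbb{P}^n(\mathbb{F}_q)$ choose the affine representative $(p_0,\dots,p_n)\in\mathbb{F}_q^{n+1}\setminus\{0\}$ whose left-most nonzero coordinate equals $1$, and fix an ordering $P_1',\dots,P_N'$ of these representatives. Then $C_{n,k}^q=\{(F(P_1'),\dots,F(P_N')) : F\in \mathbb{F}_q[x_0,\dots,x_n]_k\}$, where $\mathbb{F}_q[x_0,\dots,x_n]_k$ is the space of homogeneous polynomials of degree $k$ together with $0$. Duals are taken with respect to the standard dot product on $\mathbb{F}_q^N$, and $\operatorname{Hull}(C)=C\cap C^\perp$. *)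

theory Defs
  imports Main "HOL-Library.Cardinality"
begin

text \<open>Standard representatives of the points of P^n(F_q): vectors (p_0,...,p_n),
  encoded as functions nat => 'a vanishing beyond n, whose left-most nonzero
  coordinate equals 1.\<close>
definition proj_reps :: "nat \<Rightarrow> (nat \<Rightarrow> 'a::field) set" where
  "proj_reps n = {p. (\<forall>i>n. p i = 0) \<and> (\<exists>j\<le>n. p j = 1 \<and> (\<forall>i<j. p i = 0))}"

definition hom_exps :: "nat \<Rightarrow> nat \<Rightarrow> (nat \<Rightarrow> nat) set" where
  "hom_exps n k = {a. (\<forall>i>n. a i = 0) \<and> (\<Sum>i\<le>n. a i) = k}"

definition eval_hom :: "nat \<Rightarrow> nat \<Rightarrow> ((nat \<Rightarrow> nat) \<Rightarrow> 'a::field) \<Rightarrow> (nat \<Rightarrow> 'a) \<Rightarrow> 'a" where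
  "eval_hom n k c p = (\<Sum>a\<in>hom_exps n k. c a * (\<Prod>i\<le>n. p i ^ a i))"

text \<open>Words of F_q^N are functions on the set of point representatives
  (extended by 0 outside it).\<close>
definition proj_RM :: "nat \<Rightarrow> nat \<Rightarrow> ((nat \<Rightarrow> 'a::field) \<Rightarrow> 'a) set" where
  "proj_RM n k = {v. \<exists>c. v = (\<lambda>p. if p \<in> proj_reps n then eval_hom n k c p else 0)}"

definition dual_code :: "nat \<Rightarrow> ((nat \<Rightarrow> 'a::field) \<Rightarrow> 'a) set \<Rightarrow> ((nat \<Rightarrow> 'a) \<Rightarrow> 'a) set" where
  "dual_code n C = {v. (\<forall>p. p \<notin> proj_reps n \<longrightarrow> v p = 0) \<and>
      (\<forall>w\<in>C. (\<Sum>p\<in>proj_reps n. v p * w p) = 0)}"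

definition hull_code :: "nat \<Rightarrow> ((nat \<Rightarrow> 'a::field) \<Rightarrow> 'a) set \<Rightarrow> ((nat \<Rightarrow> 'a) \<Rightarrow> 'a) set" where
  "hull_code n C = C \<inter> dual_code n C"

end

theory Submission
  imports Defs "HOL-Computational_Algebra.Polynomial"
begin


lemma card_one_zero: "of_nat CARD('a::{finite,field}) = (0::'a)"
proof -
  have "(\<Sum>x\<in>(UNIV::'a set). x + 1) = (\<Sum>x\<in>UNIV. x)"
    by (rule sum.reindex_bij_witness[of _ "\<lambda>x. x - 1" "\<lambda>x. x + 1"]) auto
  then show ?thesis by (simp add: sum.distrib)
qed

lemma card_ge2: "CARD('a::{finite,field}) \<ge> 2"
proof -
  have "{0::'a, 1} \<subseteq> UNIV" by auto
  then have "card {0::'a,1} \<le> CARD('a)" by (rule card_mono[OF finite])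
  then show ?thesis by simp
qed

lemma fermat_field:
  fixes c :: "'a::{finite,field}"
  assumes "c \<noteq> 0" shows "c ^ (CARD('a) - 1) = 1"
proof -
  let ?U = "UNIV - {0::'a}"
  have "(\<Prod>x\<in>?U. c * x) = (\<Prod>x\<in>?U. x)"
    by (rule prod.reindex_bij_witness[of _ "\<lambda>x. x / c" "\<lambda>x. c * x"]) (use assms in auto)
  moreover have "(\<Prod>x\<in>?U. c * x) = c ^ card ?U * (\<Prod>x\<in>?U. x)"
    by (simp add: prod.distrib)
  moreover have "(\<Prod>x\<in>?U. x) \<noteq> 0" by simp
  moreover have "card ?U = CARD('a) - 1" by (simp add: card_Diff_subset)
  ultimately show ?thesis by simp
qed

definition psum :: "nat \<Rightarrow> 'a::{finite,field}" where
  "psum m = (\<Sum>x\<in>UNIV. x ^ m)"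

lemma psum_small:
  assumes "m < CARD('a::{finite,field}) - 1"
  shows "(psum m :: 'a) = 0"
proof (cases "m = 0")
  case True then show ?thesis using card_one_zero[where 'a='a] by (simp add: psum_def)
next
  case False
  let ?p = "monom (1::'a) m - [:1:]"
  have cm: "coeff ?p m = 1" using False by (cases m) auto
  then have p0: "?p \<noteq> 0" by (metis coeff_0 zero_neq_one)
  have "degree ?p \<le> m" by (rule degree_diff_le) (simp_all add: degree_monom_le)
  then have cardle: "card {x. poly ?p x = 0} \<le> m" using card_poly_roots_bound[OF p0] by linarith
  have "\<exists>c. c \<noteq> 0 \<and> c ^ m \<noteq> (1::'a)"
  proof (rule ccontr)
    assume "\<not> ?thesis"
    then have "UNIV - {0} \<subseteq> {x. poly ?p x = 0}" by (auto simp: poly_monom)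
    then have "card (UNIV - {0::'a}) \<le> card {x. poly ?p x = 0}" by (rule card_mono[OF finite])
    then show False using cardle assms by (simp add: card_Diff_subset)
  qed
  then obtain c :: 'a where c: "c \<noteq> 0" "c ^ m \<noteq> 1" by auto
  have "(\<Sum>x\<in>UNIV. (c * x) ^ m) = (\<Sum>x\<in>(UNIV::'a set). x ^ m)"
    by (rule sum.reindex_bij_witness[of _ "\<lambda>x. x / c" "\<lambda>x. c * x"]) (use c in auto)
  then have "c ^ m * psum m = psum m" by (simp add: psum_def power_mult_distrib sum_distrib_left)
  then have "(c ^ m - 1) * psum m = 0" by (simp add: algebra_simps)
  then show ?thesis using c by simp
qed

lemma pow_mod:
  fixes x :: "'a::{finite,field}"
  assumes "x \<noteq> 0" shows "x ^ m = x ^ (m mod (CARD('a) - 1))"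
proof -
  have "x ^ m = x ^ ((CARD('a) - 1) * (m div (CARD('a) - 1)) + m mod (CARD('a) - 1))" by simp
  also have "\<dots> = (x ^ (CARD('a) - 1)) ^ (m div (CARD('a) - 1)) * x ^ (m mod (CARD('a) - 1))"
    by (simp only: power_add power_mult)
  also have "\<dots> = x ^ (m mod (CARD('a) - 1))"
    by (simp only: fermat_field[OF assms] power_one mult_1)
  finally show ?thesis .
qed

lemma psum_nondiv:
  assumes "\<not> (CARD('a::{finite,field}) - 1) dvd m"
  shows "(psum m :: 'a) = 0"
proof -
  have pos: "m mod (CARD('a) - 1) > 0" using assms by (metis dvd_eq_mod_eq_0 gr0I)
  have m0: "m > 0" using assms by (auto intro: gr0I)
  have "psum m = (psum (m mod (CARD('a) - 1)) :: 'a)"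
    unfolding psum_def
  proof (rule sum.cong)
    fix x :: 'a show "x ^ m = x ^ (m mod (CARD('a) - 1))"
      using pow_mod[of x m] pos m0 by (cases "x = 0") (auto simp: power_0_left)
  qed simp
  also have "\<dots> = 0" using card_ge2[where 'a='a]
    by (intro psum_small) (simp add: mod_less_divisor)
  finally show ?thesis .
qed

lemma psum_qm1: "(psum (CARD('a::{finite,field}) - 1) :: 'a) = -1"
proof -
  have q2: "CARD('a) \<ge> 2" by (rule card_ge2)
  have "(psum (CARD('a) - 1) :: 'a) = (\<Sum>x\<in>(UNIV::'a set). if x = 0 then 0 else 1)"
    unfolding psum_def apply (rule sum.cong) apply simp
    using q2 fermat_field[where 'a='a] by (auto simp: power_0_left)
  also have "\<dots> = of_nat (card (UNIV - {0::'a}))"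
    by (simp add: sum.If_cases Compl_eq_Diff_UNIV del: card_Diff_insert)
  also have "of_nat (card (UNIV - {0::'a})) = (of_nat CARD('a) - 1 :: 'a)" 
  proof -
    have c: "card (UNIV - {0::'a}) = CARD('a) - 1" by (simp add: card_Diff_singleton_if)
    show ?thesis unfolding c using q2 by (simp add: of_nat_diff)
  qed
  also have "of_nat CARD('a) - 1 = (-1::'a)" by (simp add: card_one_zero)
  finally show ?thesis .
qed



definition gset :: "nat set \<Rightarrow> (nat \<Rightarrow> 'a) \<Rightarrow> (nat \<Rightarrow> 'a) set" where
  "gset I d = {p. \<forall>i. i \<notin> I \<longrightarrow> p i = d i}"

lemma gset_empty: "gset {} d = {d}"
  by (auto simp: gset_def)

lemma gset_insert:
  assumes "a \<notin> I"
  shows "gset (insert a I) d = (\<lambda>(t,p). p(a:=t)) ` (UNIV \<times> gset I d)"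
proof
  show "gset (insert a I) d \<subseteq> (\<lambda>(t,p). p(a:=t)) ` (UNIV \<times> gset I d)"
  proof
    fix p assume p: "p \<in> gset (insert a I) d"
    have "p = (\<lambda>(t,p). p(a:=t)) (p a, p(a := d a))" by auto
    moreover have "p(a := d a) \<in> gset I d" using p by (auto simp: gset_def)
    ultimately show "p \<in> (\<lambda>(t,p). p(a:=t)) ` (UNIV \<times> gset I d)" by blast
  qed
  show "(\<lambda>(t,p). p(a:=t)) ` (UNIV \<times> gset I d) \<subseteq> gset (insert a I) d"
    by (auto simp: gset_def)
qed

lemma gset_inj:
  assumes "a \<notin> I"
  shows "inj_on (\<lambda>(t,p). p(a:=t)) (UNIV \<times> gset I d)"
proof (rule inj_onI, clarify)
  fix t p t' p'
  assume p: "p \<in> gset I d" and p': "p' \<in> gset I d" and eq: "p(a := t) = p'(a := t')"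
  have "t = t'" using fun_cong[OF eq, of a] by simp
  moreover have "p = p'"
  proof
    fix i show "p i = p' i"
    proof (cases "i = a")
      case True then show ?thesis using p p' assms by (simp add: gset_def)
    next
      case False then show ?thesis using fun_cong[OF eq, of i] by simp
    qed
  qed
  ultimately show "t = t' \<and> p = p'" by simp
qed

lemma gset_finite:
  assumes "finite I" shows "finite (gset I (d :: nat \<Rightarrow> 'a::finite))"
  using assms
proof (induction I rule: finite_induct)
  case empty then show ?case by (simp add: gset_empty)
next
  case (insert a I) then show ?case by (simp add: gset_insert)
qed

lemma gset_sum:
  fixes f :: "nat \<Rightarrow> 'a::finite \<Rightarrow> 'b::comm_semiring_1"
  assumes "finite I"
  shows "(\<Sum>p\<in>gset I d. \<Prod>i\<in>I. f i (p i)) = (\<Prod>i\<in>I. \<Sum>x\<in>UNIV. f i x)"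
  using assms
proof (induction I rule: finite_induct)
  case empty then show ?case by (simp add: gset_empty)
next
  case (insert a I)
  have "(\<Sum>p\<in>gset (insert a I) d. \<Prod>i\<in>insert a I. f i (p i))
      = (\<Sum>tp\<in>UNIV \<times> gset I d. \<Prod>i\<in>insert a I. f i ((case tp of (t,p) \<Rightarrow> p(a:=t)) i))"
    unfolding gset_insert[OF insert(2)] by (subst sum.reindex[OF gset_inj[OF insert(2)]]) (simp add: comp_def)
  also have "\<dots> = (\<Sum>tp\<in>UNIV \<times> gset I d. f a (fst tp) * (\<Prod>i\<in>I. f i (snd tp i)))"
  proof (rule sum.cong[OF refl])
    fix tp :: "'a \<times> (nat \<Rightarrow> 'a)"
    obtain t p where tp: "tp = (t,p)" by (cases tp)
    have "(\<Prod>i\<in>I. f i ((p(a:=t)) i)) = (\<Prod>i\<in>I. f i (p i))"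
      by (rule prod.cong) (use insert(2) in auto)
    then show "(\<Prod>i\<in>insert a I. f i ((case tp of (t,p) \<Rightarrow> p(a:=t)) i)) = f a (fst tp) * (\<Prod>i\<in>I. f i (snd tp i))"
      using insert(1,2) tp by simp
  qed
  also have "\<dots> = (\<Sum>t\<in>UNIV. \<Sum>p\<in>gset I d. f a t * (\<Prod>i\<in>I. f i (p i)))"
    by (simp add: sum.cartesian_product case_prod_beta')
  also have "\<dots> = (\<Sum>t\<in>UNIV. f a t) * (\<Sum>p\<in>gset I d. (\<Prod>i\<in>I. f i (p i)))"
    by (simp add: sum_distrib_left sum_distrib_right sum.swap[of _ "gset I d"])
  also have "\<dots> = (\<Prod>i\<in>insert a I. \<Sum>x\<in>UNIV. f i x)"
    using insert by simp
  finally show ?case .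
qed



definition mon :: "nat \<Rightarrow> (nat \<Rightarrow> nat) \<Rightarrow> (nat \<Rightarrow> 'a) \<Rightarrow> 'a::field" where
  "mon n e p = (\<Prod>i\<le>n. p i ^ e i)"

definition Ssum :: "nat \<Rightarrow> (nat \<Rightarrow> nat) \<Rightarrow> 'a::{finite,field}" where
  "Ssum n e = (\<Sum>p\<in>proj_reps n. mon n e p)"

definition W :: "nat \<Rightarrow> nat \<Rightarrow> (nat \<Rightarrow> 'a::field) set" where
  "W n j = gset {j<..n} (\<lambda>i. if i = j then 1 else 0)"

lemma W_eq: "j \<le> n \<Longrightarrow> W n j = {p. (\<forall>i>n. p i = 0) \<and> p j = 1 \<and> (\<forall>i<j. p i = 0)}"
  unfolding W_def gset_def
  by (auto; metis greaterThanAtMost_iff linorder_neqE_nat order.strict_trans2)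

lemma reps_W: "proj_reps n = (\<Union>j\<le>n. W n j)"
  unfolding proj_reps_def by (auto simp: W_eq)

lemma W_disj: assumes "j \<noteq> j'" shows "W n j \<inter> W n j' = ({} :: (nat \<Rightarrow> 'a::field) set)"
proof -
  have False if p: "p \<in> W n j" "p \<in> W n j'" for p :: "nat \<Rightarrow> 'a"
  proof (cases "j < j'")
    case True
    then have "p j = 1" "p j = 0" using p assms unfolding W_def gset_def by auto
    then show False by simp
  next
    case False
    then have "p j' = 1" "p j' = 0" using p assms unfolding W_def gset_def by auto
    then show False by simp
  qed
  then show ?thesis by blast
qed

lemma W_finite: "finite (W n j :: (nat \<Rightarrow> 'a::{finite,field}) set)"
  unfolding W_def by (rule gset_finite) simp

lemma reps_finite: "finite (proj_reps n :: (nat \<Rightarrow> 'a::{finite,field}) set)"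
  unfolding reps_W by (auto intro: W_finite)

lemma W_sum:
  assumes "j \<le> n"
  shows "(\<Sum>p\<in>W n j. mon n e p) =
    (\<Prod>i<j. (0::'a::{finite,field}) ^ e i) * (\<Prod>i\<in>{j<..n}. psum (e i))"
proof -
  have split: "{..n} = {..<j} \<union> insert j {j<..n}" using assms by auto
  have "(\<Sum>p\<in>W n j. mon n e p) = (\<Sum>p\<in>W n j. (\<Prod>i<j. (0::'a) ^ e i) * (\<Prod>i\<in>{j<..n}. p i ^ e i))"
  proof (rule sum.cong[OF refl])
    fix p :: "nat \<Rightarrow> 'a" assume p: "p \<in> W n j"
    then have pj: "p j = 1" and pl: "\<And>i. i < j \<Longrightarrow> p i = 0" using W_eq[OF assms] by auto
    have "mon n e p = (\<Prod>i<j. p i ^ e i) * (\<Prod>i\<in>insert j {j<..n}. p i ^ e i)"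
      unfolding mon_def split by (rule prod.union_disjoint) auto
    also have "(\<Prod>i<j. p i ^ e i) = (\<Prod>i<j. (0::'a) ^ e i)"
      by (rule prod.cong) (auto simp: pl)
    also have "(\<Prod>i\<in>insert j {j<..n}. p i ^ e i) = (\<Prod>i\<in>{j<..n}. p i ^ e i)"
      by (simp add: pj)
    finally show "mon n e p = (\<Prod>i<j. (0::'a) ^ e i) * (\<Prod>i\<in>{j<..n}. p i ^ e i)" .
  qed
  also have "\<dots> = (\<Prod>i<j. (0::'a) ^ e i) * (\<Sum>p\<in>W n j. \<Prod>i\<in>{j<..n}. p i ^ e i)"
    by (simp add: sum_distrib_left)
  also have "(\<Sum>p\<in>W n j. \<Prod>i\<in>{j<..n}. p i ^ e i) = (\<Prod>i\<in>{j<..n}. psum (e i) :: 'a)"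
    unfolding W_def psum_def by (rule gset_sum[where f = "\<lambda>i x. x ^ e i"]) simp
  finally show ?thesis .
qed

lemma Ssum_decomp:
  "(Ssum n e :: 'a::{finite,field}) =
     (\<Sum>j\<le>n. (\<Prod>i<j. (0::'a) ^ e i) * (\<Prod>i\<in>{j<..n}. psum (e i)))"
proof -
  have "(Ssum n e :: 'a) = (\<Sum>j\<le>n. \<Sum>p\<in>W n j. mon n e p)"
    unfolding Ssum_def reps_W
    by (rule sum.UNION_disjoint) (auto simp: W_finite dest: W_disj)
  also have "\<dots> = (\<Sum>j\<le>n. (\<Prod>i<j. (0::'a) ^ e i) * (\<Prod>i\<in>{j<..n}. psum (e i)))"
    by (rule sum.cong) (auto simp: W_sum)
  finally show ?thesis .
qed



lemma Ssum_caseA: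
  fixes e :: "nat \<Rightarrow> nat"
  assumes "e 0 \<ge> 1" and "\<And>i. 1 \<le> i \<Longrightarrow> i \<le> n \<Longrightarrow> e i = CARD('a) - 1"
  shows "(Ssum n e :: 'a::{finite,field}) = (-1) ^ n"
proof -
  let ?T = "\<lambda>j. (\<Prod>i<j. (0::'a) ^ e i) * (\<Prod>i\<in>{j<..n}. psum (e i))"
  have "(Ssum n e :: 'a) = (\<Sum>j\<le>n. ?T j)" by (rule Ssum_decomp)
  also have "\<dots> = (\<Sum>j\<in>{0}. ?T j)"
  proof (rule sum.mono_neutral_right)
    show "\<forall>j\<in>{..n} - {0}. ?T j = 0"
    proof
      fix j assume "j \<in> {..n} - {0}"
      then have "0 \<in> {..<j}" by auto
      moreover have "(0::'a) ^ e 0 = 0" using assms(1) by (simp add: power_0_left)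
      ultimately have "(\<Prod>i<j. (0::'a) ^ e i) = 0" by (intro prod_zero) auto
      then show "?T j = 0" by simp
    qed
  qed auto
  also have "\<dots> = (\<Prod>i\<in>{0<..n}. psum (e i))" by simp
  also have "\<dots> = (\<Prod>i\<in>{0<..n}. (-1::'a))"
    by (rule prod.cong) (use assms(2) psum_qm1[where 'a='a] in auto)
  also have "\<dots> = (-1) ^ n" by simp
  finally show ?thesis .
qed

lemma Ssum_caseB:
  fixes m :: nat
  assumes "\<not> (CARD('a) - 1) dvd m"
  shows "(Ssum n (\<lambda>i. if i = n then m else 0) :: 'a::{finite,field}) = 1"
proof -
  let ?e = "\<lambda>i. if i = n then m else 0"
  let ?T = "\<lambda>j. (\<Prod>i<j. (0::'a) ^ ?e i) * (\<Prod>i\<in>{j<..n}. psum (?e i))"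
  have "(Ssum n ?e :: 'a) = (\<Sum>j\<le>n. ?T j)" by (rule Ssum_decomp)
  also have "\<dots> = (\<Sum>j\<in>{n}. ?T j)"
  proof (rule sum.mono_neutral_right)
    show "\<forall>j\<in>{..n} - {n}. ?T j = 0"
    proof
      fix j assume "j \<in> {..n} - {n}"
      then have "n \<in> {j<..n}" by auto
      moreover have "psum (?e n) = (0::'a)" using psum_nondiv[OF assms] by simp
      ultimately have "(\<Prod>i\<in>{j<..n}. psum (?e i)) = (0::'a)"
        by (intro prod_zero) auto
      then show "?T j = 0" by simp
    qed
  qed auto
  also have "\<dots> = 1" by simp
  finally show ?thesis .
qed



lemma scale_image:
  "(\<lambda>(c,p). (\<lambda>i. c * p i)) ` ((UNIV - {0}) \<times> proj_reps n)
     = gset {..n} (\<lambda>_. 0) - {(\<lambda>_. 0) :: nat \<Rightarrow> 'a::field}"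
proof
  show "(\<lambda>(c,p). (\<lambda>i. c * p i)) ` ((UNIV - {0}) \<times> proj_reps n) \<subseteq> gset {..n} (\<lambda>_. 0) - {(\<lambda>_. 0) :: nat \<Rightarrow> 'a}"
  proof
    fix y :: "nat \<Rightarrow> 'a" assume "y \<in> (\<lambda>(c,p). (\<lambda>i. c * p i)) ` ((UNIV - {0}) \<times> proj_reps n)"
    then obtain c :: 'a and p :: "nat \<Rightarrow> 'a" where y: "y = (\<lambda>i. c * p i)" and c: "c \<noteq> 0" and p: "p \<in> proj_reps n"
      by auto
    then obtain j where "p j = 1" by (auto simp: proj_reps_def)
    then have "(\<lambda>i. c * p i) \<noteq> (\<lambda>_. 0)" using c by (metis mult_1_right)
    moreover have "(\<lambda>i. c * p i) \<in> gset {..n} (\<lambda>_. 0)" using p by (auto simp: proj_reps_def gset_def)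
    ultimately show "y \<in> gset {..n} (\<lambda>_. 0) - {\<lambda>_. 0}" using y by simp
  qed
  show "gset {..n} (\<lambda>_. 0) - {(\<lambda>_. 0) :: nat \<Rightarrow> 'a} \<subseteq> (\<lambda>(c,p). (\<lambda>i. c * p i)) ` ((UNIV - {0}) \<times> proj_reps n)"
  proof
    fix x :: "nat \<Rightarrow> 'a" assume x: "x \<in> gset {..n} (\<lambda>_. 0) - {\<lambda>_. 0}"
    then have "\<exists>i. x i \<noteq> 0" by auto
    define j where "j = (LEAST i. x i \<noteq> 0)"
    have xj: "x j \<noteq> 0" unfolding j_def by (rule LeastI_ex) fact
    have xl: "\<And>i. i < j \<Longrightarrow> x i = 0" unfolding j_def using not_less_Least by blast
    have xn: "\<And>i. i > n \<Longrightarrow> x i = 0" using x by (auto simp: gset_def)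
    have jn: "j \<le> n"
    proof (rule ccontr)
      assume "\<not> j \<le> n" then have "x j = 0" using xn by simp
      with xj show False by simp
    qed
    define p where "p = (\<lambda>i. x i / x j)"
    have pr: "p \<in> proj_reps n" unfolding proj_reps_def p_def using xj xl xn jn by auto
    have xe: "x = (\<lambda>i. x j * p i)" unfolding p_def using xj by auto
    show "x \<in> (\<lambda>(c,p). (\<lambda>i. c * p i)) ` ((UNIV - {0}) \<times> proj_reps n)"
      by (rule image_eqI[of _ _ "(x j, p)"]) (use xe xj pr in auto)
  qed
qed

lemma scale_inj:
  "inj_on (\<lambda>(c,p). (\<lambda>i. c * p i)) ((UNIV - {0::'a::field}) \<times> proj_reps n)"
proof (rule inj_onI)
  fix cp cp' :: "'a \<times> (nat \<Rightarrow> 'a)"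
  assume cp: "cp \<in> (UNIV - {0}) \<times> proj_reps n" and cp': "cp' \<in> (UNIV - {0}) \<times> proj_reps n"
    and eq0: "(\<lambda>(c,p). (\<lambda>i. c * p i)) cp = (\<lambda>(c,p). (\<lambda>i. c * p i)) cp'"
  obtain c p where cpd: "cp = (c,p)" by (cases cp)
  obtain c' p' where cpd': "cp' = (c',p')" by (cases cp')
  have c: "c \<noteq> 0" and c': "c' \<noteq> 0" and p: "p \<in> proj_reps n" and p': "p' \<in> proj_reps n"
    using cp cp' cpd cpd' by auto
  have eq: "(\<lambda>i. c * p i) = (\<lambda>i. c' * p' i)" using eq0 cpd cpd' by simp
  have e: "\<And>i. c * p i = c' * p' i" using eq by meson
  obtain j where j: "p j = 1" "\<And>i. i < j \<Longrightarrow> p i = 0" using p by (auto simp: proj_reps_def)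
  obtain j' where j': "p' j' = 1" "\<And>i. i < j' \<Longrightarrow> p' i = 0" using p' by (auto simp: proj_reps_def)
  have "j = j'"
  proof (rule ccontr)
    assume "j \<noteq> j'"
    then consider "j < j'" | "j' < j" by linarith
    then show False
    proof cases
      case 1 then show False using e[of j] j j' c by simp
    next
      case 2 then show False using e[of j'] j j' c' by simp
    qed
  qed
  then have cc: "c = c'" using e[of j] j j' by simp
  moreover have "p = p'"
  proof
    fix i show "p i = p' i" using e[of i] cc c by simp
  qed
  ultimately show "cp = cp'" using cpd cpd' by simp
qed

lemma mon_scale: "mon n e (\<lambda>i. c * p i) = c ^ (\<Sum>i\<le>n. e i) * mon n e p"
  unfolding mon_def by (simp add: power_mult_distrib prod.distrib power_sum)

lemma Ssum_zero_div:
  fixes e :: "nat \<Rightarrow> nat"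
  assumes dv: "(CARD('a) - 1) dvd (\<Sum>i\<le>n. e i)"
    and i0: "i0 \<le> n" "e i0 < CARD('a) - 1" and i1: "i1 \<le> n" "e i1 > 0"
  shows "(Ssum n e :: 'a::{finite,field}) = 0"
proof -
  let ?V = "gset {..n} (\<lambda>_. 0) :: (nat \<Rightarrow> 'a) set"
  let ?d = "\<Sum>i\<le>n. e i"
  have finV: "finite ?V" by (rule gset_finite) simp
  have "(\<Sum>x\<in>?V. mon n e x) = (\<Prod>i\<le>n. psum (e i) :: 'a)"
    unfolding mon_def psum_def by (rule gset_sum[where f = "\<lambda>i x. x ^ e i"]) simp
  also have "\<dots> = 0" using i0 psum_small[of "e i0", where 'a='a] by (intro prod_zero) auto
  finally have s0: "(\<Sum>x\<in>?V. mon n e x) = 0" .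
  have m0: "mon n e ((\<lambda>_. 0) :: nat \<Rightarrow> 'a) = 0"
    unfolding mon_def using i1 by (intro prod_zero) (auto simp: power_0_left intro!: bexI[of _ i1])
  have "(\<lambda>_. 0) \<in> ?V" by (simp add: gset_def)
  then have "(\<Sum>x\<in>?V. mon n e x) = mon n e (\<lambda>_. 0) + (\<Sum>x\<in>?V - {\<lambda>_. 0}. mon n e x)"
    using finV by (simp add: sum.remove)
  then have s1: "(\<Sum>x\<in>?V - {\<lambda>_. 0}. mon n e x) = 0" using s0 m0 by simp
  have "(\<Sum>x\<in>?V - {\<lambda>_. 0}. mon n e x)
      = (\<Sum>cp\<in>(UNIV - {0}) \<times> proj_reps n. mon n e ((\<lambda>(c,p). (\<lambda>i. c * p i)) cp))"
    unfolding scale_image[symmetric] by (subst sum.reindex[OF scale_inj]) (simp add: comp_def)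
  also have "\<dots> = (\<Sum>c\<in>UNIV - {0}. \<Sum>p\<in>proj_reps n. c ^ ?d * mon n e p)"
    by (simp add: sum.cartesian_product case_prod_beta' mon_scale)
  also have "\<dots> = (\<Sum>c\<in>UNIV - {0::'a}. Ssum n e)"
  proof (rule sum.cong[OF refl])
    fix c :: 'a assume "c \<in> UNIV - {0}"
    then have cnz: "c \<noteq> 0" by simp
    obtain t where t: "?d = (CARD('a) - 1) * t" using dv by (elim dvdE)
    have "c ^ ?d = (c ^ (CARD('a) - 1)) ^ t" unfolding t by (simp only: power_mult)
    then have "c ^ ?d = 1" using fermat_field[OF cnz] by simp
    then show "(\<Sum>p\<in>proj_reps n. c ^ ?d * mon n e p) = Ssum n e" by (simp add: Ssum_def)
  qed
  also have "\<dots> = of_nat (CARD('a) - 1) * Ssum n e"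
    by (simp add: card_Diff_singleton_if)
  also have "\<dots> = - Ssum n e"
    using card_ge2[where 'a='a] card_one_zero[where 'a='a] by (simp add: of_nat_diff)
  finally show ?thesis using s1 by simp
qed



lemma split_exps:
  fixes e :: "nat \<Rightarrow> nat"
  shows "m \<le> (\<Sum>i\<le>n. e i) \<Longrightarrow> \<exists>a. (\<forall>i. a i \<le> e i) \<and> (\<forall>i>n. a i = 0) \<and> (\<Sum>i\<le>n. a i) = m"
proof (induction n arbitrary: m)
  case 0
  then show ?case by (intro exI[of _ "\<lambda>i. if i = 0 then m else 0"]) auto
next
  case (Suc n)
  show ?case
  proof (cases "e (Suc n) \<ge> m")
    case True
    then show ?thesis by (intro exI[of _ "\<lambda>i. if i = Suc n then m else 0"]) auto
  next
    case False
    then have "m - e (Suc n) \<le> (\<Sum>i\<le>n. e i)" using Suc.prems by simp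
    from Suc.IH[OF this] obtain a where a: "\<forall>i. a i \<le> e i" "\<forall>i>n. a i = 0" "(\<Sum>i\<le>n. a i) = m - e (Suc n)"
      by blast
    let ?a = "a(Suc n := e (Suc n))"
    have "(\<Sum>i\<le>n. ?a i) = (\<Sum>i\<le>n. a i)" by (rule sum.cong) auto
    then have "(\<Sum>i\<le>Suc n. ?a i) = m" using a(3) False by simp
    moreover have "\<forall>i. ?a i \<le> e i" using a(1) by simp
    moreover have "\<forall>i>Suc n. ?a i = 0" using a(2) by simp
    ultimately show ?thesis by blast
  qed
qed

lemma hom_exps_finite: "finite (hom_exps n k)"
proof -
  let ?L = "{xs :: nat list. set xs \<subseteq> {..k} \<and> length xs = Suc n}"
  have fin: "finite ?L" by (rule finite_lists_length_eq) simp
  have inj: "inj_on (\<lambda>a. map a [0..<Suc n]) (hom_exps n k)"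
  proof (rule inj_onI)
    fix a b assume a: "a \<in> hom_exps n k" and b: "b \<in> hom_exps n k"
      and eq: "map a [0..<Suc n] = map b [0..<Suc n]"
    show "a = b"
    proof
      fix i show "a i = b i"
      proof (cases "i \<le> n")
        case True
        have "\<forall>x\<in>set [0..<Suc n]. a x = b x" using eq by (simp only: map_eq_conv)
        then show ?thesis using True by (simp del: upt_Suc)
      next
        case False then show ?thesis using a b by (simp add: hom_exps_def)
      qed
    qed
  qed
  have sub: "(\<lambda>a. map a [0..<Suc n]) ` hom_exps n k \<subseteq> ?L"
  proof
    fix xs assume "xs \<in> (\<lambda>a. map a [0..<Suc n]) ` hom_exps n k"
    then obtain a where a: "a \<in> hom_exps n k" and xs: "xs = map a [0..<Suc n]" by blast
    have "set xs \<subseteq> {..k}"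
    proof
      fix x assume "x \<in> set xs"
      then obtain i where i: "i \<le> n" "x = a i" using xs by (auto simp del: upt_Suc simp: less_Suc_eq_le)
      have "a i \<le> (\<Sum>j\<le>n. a j)" using i(1) by (intro member_le_sum) auto
      then show "x \<in> {..k}" using a i by (simp add: hom_exps_def)
    qed
    then show "xs \<in> ?L" using xs by simp
  qed
  show ?thesis using finite_subset[OF sub fin] inj finite_imageD by blast
qed

definition word :: "nat \<Rightarrow> nat \<Rightarrow> ((nat \<Rightarrow> nat) \<Rightarrow> 'a::field) \<Rightarrow> (nat \<Rightarrow> 'a) \<Rightarrow> 'a" where
  "word n k c = (\<lambda>p. if p \<in> proj_reps n then eval_hom n k c p else 0)"

lemma proj_RM_word: "proj_RM n k = range (word n k)"
  unfolding proj_RM_def word_def by auto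

lemma eval_hom_mon: "eval_hom n k c p = (\<Sum>a\<in>hom_exps n k. c a * mon n a p)"
  unfolding eval_hom_def mon_def by simp

lemma mon_add: "mon n a p * mon n b p = mon n (\<lambda>i. a i + b i) p"
  unfolding mon_def by (simp add: power_add prod.distrib)

lemma inner_expand:
  "(\<Sum>p\<in>proj_reps n. word n k c p * word n k d p) =
   (\<Sum>a\<in>hom_exps n k. \<Sum>b\<in>hom_exps n k. c a * d b * (Ssum n (\<lambda>i. a i + b i) :: 'a::{finite,field}))"
proof -
  let ?H = "hom_exps n k" and ?R = "proj_reps n :: (nat \<Rightarrow> 'a) set"
  have "(\<Sum>p\<in>?R. word n k c p * word n k d p) = (\<Sum>p\<in>?R. eval_hom n k c p * eval_hom n k d p)"
    by (rule sum.cong) (auto simp: word_def)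
  also have "\<dots> = (\<Sum>p\<in>?R. \<Sum>a\<in>?H. \<Sum>b\<in>?H. c a * d b * mon n (\<lambda>i. a i + b i) p)"
    unfolding eval_hom_mon sum_product
    by (intro sum.cong refl) (simp add: mon_add[symmetric] algebra_simps)
  also have "\<dots> = (\<Sum>a\<in>?H. \<Sum>b\<in>?H. \<Sum>p\<in>?R. c a * d b * mon n (\<lambda>i. a i + b i) p)"
    by (simp add: sum.swap[of _ ?R])
  also have "\<dots> = (\<Sum>a\<in>?H. \<Sum>b\<in>?H. c a * d b * Ssum n (\<lambda>i. a i + b i))"
    by (simp add: Ssum_def sum_distrib_left)
  finally show ?thesis .
qed

lemma eval_delta:
  assumes "a \<in> hom_exps n k"
  shows "eval_hom n k (\<lambda>x. if x = a then 1 else 0) p = mon n a (p :: nat \<Rightarrow> 'a::field)"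
proof -
  have "(\<Sum>x\<in>hom_exps n k. (if x = a then 1 else 0) * mon n x p) = (\<Sum>x\<in>hom_exps n k. if x = a then mon n x p else 0)"
    by (rule sum.cong) auto
  also have "\<dots> = mon n a p" using assms hom_exps_finite[of n k] by (simp add: sum.delta')
  finally show ?thesis unfolding eval_hom_mon .
qed

lemma inner_delta:
  assumes "a \<in> hom_exps n k" "b \<in> hom_exps n k"
  shows "(\<Sum>p\<in>proj_reps n. word n k (\<lambda>x. if x = a then 1 else 0) p * word n k (\<lambda>x. if x = b then 1 else 0) p)
     = (Ssum n (\<lambda>i. a i + b i) :: 'a::{finite,field})"
  unfolding Ssum_def
  by (rule sum.cong) (auto simp: word_def eval_delta[OF assms(1)] eval_delta[OF assms(2)] mon_add)



theorem mainTheorem5: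
  fixes n k :: nat
  assumes "n \<ge> 1" and "1 \<le> k" and "k \<le> n * (CARD('a) - 1)"
  shows "((proj_RM n k :: ((nat \<Rightarrow> 'a::{finite,field}) \<Rightarrow> 'a) set) \<subseteq> dual_code n (proj_RM n k)
           \<longleftrightarrow> (2 * k \<le> n * (CARD('a) - 1) \<and> (2 * k) mod (CARD('a) - 1) = 0))
       \<and> ((2 * k \<le> n * (CARD('a) - 1) \<and> (2 * k) mod (CARD('a) - 1) = 0)
           \<longrightarrow> hull_code n (proj_RM n k :: ((nat \<Rightarrow> 'a) \<Rightarrow> 'a) set) = proj_RM n k)"
proof -
  let ?q = "CARD('a)"
  let ?C = "proj_RM n k :: ((nat \<Rightarrow> 'a) \<Rightarrow> 'a) set"
  let ?P = "2 * k \<le> n * (?q - 1) \<and> (2 * k) mod (?q - 1) = 0"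
  let ?H = "hom_exps n k"
  have q2: "?q \<ge> 2" by (rule card_ge2)
  have ifdir: "?C \<subseteq> dual_code n ?C" if P: ?P
  proof -
    have S0: "Ssum n (\<lambda>i. a i + b i) = (0::'a)" if ab: "a \<in> ?H" "b \<in> ?H" for a b
    proof -
      let ?e = "\<lambda>i. a i + b i"
      have se: "(\<Sum>i\<le>n. ?e i) = 2*k" using ab by (simp add: hom_exps_def sum.distrib)
      have dv: "(?q-1) dvd (\<Sum>i\<le>n. ?e i)" using se P by (simp add: dvd_eq_mod_eq_0)
      have "\<exists>i0\<le>n. ?e i0 < ?q - 1"
      proof (rule ccontr)
        assume "\<not> ?thesis" then have "\<forall>i\<le>n. ?q-1 \<le> ?e i" by auto
        then have "(\<Sum>i\<le>n. (?q-1)) \<le> (\<Sum>i\<le>n. ?e i)" by (intro sum_mono) auto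
        then have "Suc n * (?q-1) \<le> 2*k" using se by simp
        moreover have "Suc n * (?q-1) = (?q-1) + n*(?q-1)" by simp
        ultimately show False using P q2 by linarith
      qed
      then obtain i0 where i0: "i0 \<le> n" "?e i0 < ?q - 1" by blast
      have "(\<Sum>i\<le>n. ?e i) \<noteq> 0" using se assms(2) by linarith
      then obtain i1 where i1': "i1 \<in> {..n}" "?e i1 \<noteq> 0"
        by (metis (no_types, lifting) sum.neutral)
      have i1: "i1 \<le> n" "?e i1 > 0" using i1' by auto
      show ?thesis by (rule Ssum_zero_div[OF dv i0 i1])
    qed
    show "?C \<subseteq> dual_code n ?C"
    proof
      fix v assume "v \<in> ?C" then obtain c where v: "v = word n k c" by (auto simp: proj_RM_word)
      show "v \<in> dual_code n ?C" unfolding dual_code_def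
      proof (intro CollectI conjI allI impI ballI)
        fix p :: "nat \<Rightarrow> 'a" assume "p \<notin> proj_reps n" then show "v p = 0" by (simp add: v word_def)
      next
        fix w assume "w \<in> ?C" then obtain d where w: "w = word n k d" by (auto simp: proj_RM_word)
        show "(\<Sum>p\<in>proj_reps n. v p * w p) = 0" unfolding v w inner_expand by (simp add: S0)
      qed
    qed
  qed
  have onlyif: ?P if so: "?C \<subseteq> dual_code n ?C"
  proof -
    have key: "Ssum n (\<lambda>i. a i + b i) = (0::'a)" if ab: "a \<in> ?H" "b \<in> ?H" for a b
    proof -
      let ?ca = "\<lambda>x. if x = a then 1 else (0::'a)"
      let ?cb = "\<lambda>x. if x = b then 1 else (0::'a)"
      have "word n k ?ca \<in> ?C" "word n k ?cb \<in> ?C" by (auto simp: proj_RM_word)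
      then have "(\<Sum>p\<in>proj_reps n. word n k ?ca p * word n k ?cb p) = 0"
        using so unfolding dual_code_def by blast
      then show ?thesis using inner_delta[OF ab, where 'a='a] by simp
    qed
    show ?P
    proof (rule ccontr)
      assume nP: "\<not> ?P"
      show False
      proof (cases "2*k \<le> n*(?q-1)")
        case True
        then have nd: "\<not> (?q-1) dvd (2*k)" using nP by (simp add: dvd_eq_mod_eq_0)
        let ?a = "\<lambda>i::nat. if i = n then k else 0"
        have aH: "?a \<in> ?H" by (simp add: hom_exps_def)
        have "(\<lambda>i. ?a i + ?a i) = (\<lambda>i. if i = n then 2*k else 0)" by auto
        moreover have "Ssum n (\<lambda>i. if i = n then 2*k else 0) = (1::'a)" by (rule Ssum_caseB[OF nd])
        ultimately have "Ssum n (\<lambda>i. ?a i + ?a i) = (1::'a)" by simp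
        then show False using key[OF aH aH] by simp
      next
        case False
        let ?e = "\<lambda>i::nat. if i = 0 then 2*k - n*(?q-1) else if i \<le> n then ?q - 1 else 0"
        obtain m where m: "n = Suc m" using assms(1) by (cases n) auto
        have "(\<Sum>i\<le>n. ?e i) = ?e 0 + (\<Sum>i\<le>m. ?e (Suc i))" unfolding m by (rule sum.atMost_Suc_shift)
        also have "(\<Sum>i\<le>m. ?e (Suc i)) = (\<Sum>i\<le>m. ?q - 1)" by (rule sum.cong) (auto simp: m)
        finally have se: "(\<Sum>i\<le>n. ?e i) = 2*k" using False m by simp
        obtain a where a: "\<forall>i. a i \<le> ?e i" "\<forall>i>n. a i = 0" "(\<Sum>i\<le>n. a i) = k"
          using split_exps[where m=k and n=n and e="?e"] se by auto
        let ?b = "\<lambda>i. ?e i - a i"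
        have aH: "a \<in> ?H" using a by (simp add: hom_exps_def)
        have "(\<Sum>i\<le>n. ?b i) = (\<Sum>i\<le>n. ?e i) - (\<Sum>i\<le>n. a i)"
          by (rule sum_subtractf_nat) (use a(1) in auto)
        then have bH: "?b \<in> ?H" using a se by (simp add: hom_exps_def)
        have ab: "(\<lambda>i. a i + ?b i) = ?e" using a(1) by (auto intro!: ext simp: le_add_diff_inverse)
        have "Ssum n ?e = ((-1)^n :: 'a)"
          by (rule Ssum_caseA) (use False in auto)
        then show False using key[OF aH bH] ab by simp
      qed
    qed
  qed
  have iff: "?C \<subseteq> dual_code n ?C \<longleftrightarrow> ?P"
  proof
    assume "?C \<subseteq> dual_code n ?C" then show ?P by (rule onlyif)
  next
    assume ?P then show "?C \<subseteq> dual_code n ?C" by (rule ifdir)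
  qed
  have hull: "?P \<longrightarrow> hull_code n ?C = ?C"
  proof
    assume ?P then have "?C \<subseteq> dual_code n ?C" by (rule ifdir)
    then show "hull_code n ?C = ?C" unfolding hull_code_def by (rule Int_absorb2)
  qed
  show ?thesis by (rule conjI[OF iff hull])
qed

end
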